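(* HazardPointersPOP, as described in the context, is robust: the number of retired but not yet freed nodes is bounded, regardless of delayed or stalled threads.
   Context: Setting: an asynchronous shared-memory system with a fixed number $N$ of threads operating on a linked concurrent data structure; each unlinked node is retired by exactly one thread. HazardPointersPOP: each thread has at most $H$ local reservation slots, a row of a shared reservation array, a shared counter publishCounter and a private retire list. Reading a node stores its pointer into a local slot (validated by re-reading the source pointer) without publishing; local slots are cleared at the end of each operation. When a thread's retire list reaches a threshold $r$ it records all publishCounters, sends a POSIX signal to every other thread (whose handler copies its local reservations into its shared slots and increments its publishCounter), waits until all other publishCounters have increased, then frees every node in its retire list that is not among the published reservations. Assumption: after being signalled, a thread publishes its reservations within bounded time. *)

theory Defs
  imports Main
begin

text \<open>Abstract interleaving model of HazardPointersPOP for N threads (indices 0..N-1),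
  at most H local reservation slots per thread, and retire threshold r.  The data structure itself is abstracted away:
  a thread may reserve (read) any node, which only over-approximates the behaviours.\<close>

datatype rmode = Idle | Waiting "nat \<Rightarrow> nat"
  \<comment> \<open>Waiting snap: reclaiming, waiting for all other publishCounters to exceed snap\<close>

record 'n hpstate =
  local   :: "nat \<Rightarrow> 'n set"    \<comment> \<open>local (unpublished) reservation slots\<close>
  shared  :: "nat \<Rightarrow> 'n set"
  pcnt    :: "nat \<Rightarrow> nat"
  sig     :: "nat \<Rightarrow> bool"      \<comment> \<open>pending POSIX signal\<close>
  rlist   :: "nat \<Rightarrow> 'n set"
  mode    :: "nat \<Rightarrow> rmode"
  retired :: "'n set"
  freed   :: "'n set"

definition hp_init :: "'n hpstate" where
  "hp_init = \<lparr>local = (\<lambda>_. {}), shared = (\<lambda>_. {}), pcnt = (\<lambda>_. 0), sig = (\<lambda>_. False),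
              rlist = (\<lambda>_. {}), mode = (\<lambda>_. Idle), retired = {}, freed = {}\<rparr>"

inductive hp_reach :: "nat \<Rightarrow> nat \<Rightarrow> nat \<Rightarrow> 'n hpstate \<Rightarrow> bool" for N H r where
  init: "hp_reach N H r hp_init"
| read: "\<lbrakk> hp_reach N H r s; t < N; mode s t = Idle;
          x \<in> L; L \<subseteq> insert x (local s t); finite L; card L \<le> H \<rbrakk>
        \<Longrightarrow> hp_reach N H r (s\<lparr>local := (local s)(t := L)\<rparr>)"
| end_op: "\<lbrakk> hp_reach N H r s; t < N; mode s t = Idle \<rbrakk>
        \<Longrightarrow> hp_reach N H r (s\<lparr>local := (local s)(t := {})\<rparr>)"
| retire: "\<lbrakk> hp_reach N H r s; t < N; mode s t = Idle; x \<notin> retired s;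
            R = insert x (rlist s t) \<rbrakk>
        \<Longrightarrow> hp_reach N H r (s\<lparr>rlist := (rlist s)(t := R),
                               retired := insert x (retired s),
                               mode := (if r \<le> card R then (mode s)(t := Waiting (pcnt s))
                                        else mode s),
                               sig := (if r \<le> card R
                                       then (\<lambda>u. if u < N \<and> u \<noteq> t then True else sig s u)
                                       else sig s)\<rparr>)"
| handler: "\<lbrakk> hp_reach N H r s; t < N; sig s t \<rbrakk>
        \<Longrightarrow> hp_reach N H r (s\<lparr>shared := (shared s)(t := local s t),
                               pcnt := (pcnt s)(t := Suc (pcnt s t)),
                               sig := (sig s)(t := False)\<rparr>)"
| reclaim: "\<lbrakk> hp_reach N H r s; t < N; mode s t = Waiting snap;
             \<forall>u<N. u \<noteq> t \<longrightarrow> snap u < pcnt s u;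
             P = (\<Union>u\<in>{u. u < N}. shared s u) \<rbrakk>
        \<Longrightarrow> hp_reach N H r (s\<lparr>rlist := (rlist s)(t := rlist s t \<inter> P),
                               freed := freed s \<union> (rlist s t - P),
                               mode := (mode s)(t := Idle)\<rparr>)"

end

theory Submission
  imports Defs
begin

definition hinv :: "nat \<Rightarrow> nat \<Rightarrow> nat \<Rightarrow> 'n hpstate \<Rightarrow> bool" where
  "hinv N H r s \<longleftrightarrow>
     (\<forall>t. finite (local s t) \<and> card (local s t) \<le> H) \<and>
     (\<forall>t. finite (shared s t) \<and> card (shared s t) \<le> H) \<and>
     (\<forall>t. finite (rlist s t) \<and> card (rlist s t) \<le> max r (N*H+1) \<and>
          (mode s t = Idle \<longrightarrow> card (rlist s t) < max r (N*H+1))) \<and>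
     retired s - freed s \<subseteq> (\<Union>t\<in>{t. t < N}. rlist s t)"

lemma card_P:
  assumes "\<forall>t. finite (shared s t) \<and> card (shared s t) \<le> H"
  shows "finite (\<Union>u\<in>{u. u < N}. shared s u) \<and> card (\<Union>u\<in>{u. u < N}. shared s u) \<le> N*H"
proof -
  have "card (\<Union>u\<in>{u. u < N}. shared s u) \<le> (\<Sum>u\<in>{u. u < N}. card (shared s u))"
    by (rule card_UN_le) simp
  also have "\<dots> \<le> (\<Sum>u\<in>{u. u < N}. H)" by (rule sum_mono) (use assms in auto)
  also have "\<dots> = N*H" by simp
  finally show ?thesis using assms by auto
qed

lemma hinv_reach: "hp_reach N H r s \<Longrightarrow> hinv N H r s"
proof (induction rule: hp_reach.induct)
  case init
  then show ?case by (simp add: hinv_def hp_init_def)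
next
  case (read s t x L)
  then show ?case by (auto simp: hinv_def)
next
  case (end_op s t)
  then show ?case by (auto simp: hinv_def)
next
  case (retire s t x R)
  let ?M = "max r (N*H+1)"
  have fin: "finite (rlist s t)" and lt: "card (rlist s t) < ?M"
    using retire by (auto simp: hinv_def)
  have cR: "card R \<le> ?M" using retire fin lt by (simp add: card_insert_if)
  have fR: "finite R" using retire fin by simp
  show ?case using retire cR fR unfolding hinv_def
    by (auto split: if_splits)
next
  case (handler s t)
  then show ?case by (auto simp: hinv_def)
next
  case (reclaim s t snap P)
  let ?M = "max r (N*H+1)"
  have P: "finite P \<and> card P \<le> N*H" using reclaim card_P[of s H N] by (auto simp: hinv_def)
  have "card (rlist s t \<inter> P) \<le> card P" using P by (simp add: card_mono)
  then have c: "card (rlist s t \<inter> P) < ?M" using P by linarith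
  show ?case using reclaim c P unfolding hinv_def by auto
qed

theorem mainTheorem8:
  fixes N H r :: nat
  shows "\<exists>B::nat. \<forall>s :: 'n hpstate. hp_reach N H r s \<longrightarrow>
           finite (retired s - freed s) \<and> card (retired s - freed s) \<le> B"
proof (intro exI allI impI)
  fix s :: "'n hpstate"
  assume "hp_reach N H r s"
  then have I: "hinv N H r s" by (rule hinv_reach)
  let ?M = "max r (N*H+1)"
  let ?U = "\<Union>t\<in>{t. t < N}. rlist s t"
  have fU: "finite ?U" using I by (auto simp: hinv_def)
  have "card ?U \<le> (\<Sum>t\<in>{t. t < N}. card (rlist s t))" by (rule card_UN_le) simp
  also have "\<dots> \<le> (\<Sum>t\<in>{t. t < N}. ?M)" by (rule sum_mono) (use I in \<open>auto simp: hinv_def\<close>)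
  also have "\<dots> = N * ?M" by simp
  finally have cU: "card ?U \<le> N * ?M" .
  have sub: "retired s - freed s \<subseteq> ?U" using I by (simp add: hinv_def)
  show "finite (retired s - freed s) \<and> card (retired s - freed s) \<le> N * ?M"
    using finite_subset[OF sub fU] card_mono[OF fU sub] cU by simp
qed

end
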